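(* Assume the standing setup below, and let $i$ be an integer with $0\le i\le s-2r+1$. Then, as subspaces of the space of linear forms over $\mathbb{F}_p$ in $x_1,\ldots,x_m$, \[ \Big\langle L_H : H\in \textstyle\bigcup_{j=i}^{i+2r-1}\mathbb{P}_j(X)\Big\rangle =\Big\langle L_H : H\in \textstyle\bigcup_{j=i}^{i+2r-1}\mathbb{P}_j(X)\Big\rangle+\Big\langle \sum_{H\in\mathbb{P}_{i+2r}(X),\,I\subseteq H} L_H : I\in \mathbb{P}_i(X)\Big\rangle, \] where $\langle S\rangle$ denotes the $\mathbb{F}_p$-span of $S$.
   Context: Standing setup: $p$ is a prime; $K=\{k_1,\ldots,k_r\}$ and $L=\{l_1,\ldots,l_s\}$ are disjoint subsets of $\{0,1,\ldots,p-1\}$; $\mathcal{A}=\{A_1,\ldots,A_m\}$ is a family of distinct subsets of $[n]$ with $|A_i|\pmod p\in K$ for all $i$ and $|A_i\cap A_j|\pmod p\in L$ for all $i\ne j$. Let $X=[n-1]$. Associate a variable $x_i$ to each $A_i$, and for each $I\subseteq X$ define the linear form over $\mathbb{F}_p$: $L_I=\sum_{i:\ I\subseteq A_i} x_i$. For $j\ge0$, $\mathbb{P}_j(X)$ is the set of $j$-element subsets of $X$. *)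

theory Defs
  imports Complex_Main "HOL-Library.Function_Algebras" "HOL-Computational_Algebra.Primes"
begin

text \<open>Linear forms over the field F (of prime order p) in the variables x_0,...,x_{m-1}
  are represented by their coefficient vectors nat => F (coefficients outside {..<m} are 0).\<close>

definition fscale :: "'a::field \<Rightarrow> (nat \<Rightarrow> 'a) \<Rightarrow> (nat \<Rightarrow> 'a)" where
  "fscale c f = (\<lambda>k. c * f k)"

abbreviation fspan :: "(nat \<Rightarrow> 'a::field) set \<Rightarrow> (nat \<Rightarrow> 'a) set" where
  "fspan S \<equiv> module.span fscale S"

definition LI :: "(nat \<Rightarrow> nat set) \<Rightarrow> nat \<Rightarrow> nat set \<Rightarrow> (nat \<Rightarrow> 'a::field)" where
  "LI A m I = (\<lambda>k. if k < m \<and> I \<subseteq> A k then 1 else 0)"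

definition Pj :: "nat \<Rightarrow> nat set \<Rightarrow> nat set set" where
  "Pj j X = {H. H \<subseteq> X \<and> card H = j}"

end

theory Submission imports Defs "HOL-Number_Theory.Residues" begin

lemma binom_t: "t * (t choose j) = Suc j * (t choose Suc j) + j * (t choose j)"
  by (metis (lifting) ext Suc_times_binomial add.assoc add.commute
    add_left_imp_eq binomial_Suc_Suc distrib_left mult_Suc)

lemma fmod: "Modules.module (fscale :: 'a::field \<Rightarrow> (nat \<Rightarrow> 'a) \<Rightarrow> _)"
  by unfold_locales (auto simp: fscale_def algebra_simps fun_eq_iff)

lemma charp: assumes "prime p" "card (UNIV :: 'a::{field,finite} set) = p"
  shows "CHAR('a) = p"
proof -
  have "CHAR('a) dvd p" using CHAR_dvd_CARD[where 'a='a] assms by simp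
  moreover have "CHAR('a) \<noteq> 1" using CHAR_not_1'[where 'a='a] by simp
  ultimately show ?thesis using assms(1) prime_nat_iff by blast
qed

lemma of_nat_mod_char: "CHAR('a::field) = p \<Longrightarrow> (of_nat (x mod p) :: 'a) = of_nat x"
  by (simp add: of_nat_eq_iff_cong_CHAR cong_def)

lemma not_dvd_fact: "prime (p::nat) \<Longrightarrow> d < p \<Longrightarrow> \<not> p dvd fact d"
proof (induction d)
  case 0 then show ?case using prime_gt_1_nat[of p] by auto
next
  case (Suc d)
  have "\<not> p dvd Suc d" using Suc.prems by (auto dest: dvd_imp_le)
  moreover have "fact (Suc d) = Suc d * (fact d :: nat)" by simp
  ultimately show ?case using Suc prime_dvd_mult_iff[of p "Suc d" "fact d"] by simp
qed

lemma sum_fun: "(\<lambda>k. \<Sum>x\<in>S. f x k) = sum f S"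
proof (cases "finite S")
  case True then show ?thesis
    by (induction S rule: finite_induct) (auto simp: fun_eq_iff)
qed (auto simp: fun_eq_iff)

lemma sum_fun_apply: "sum f S k = (\<Sum>x\<in>S. f x k)"
  by (metis sum_fun)

lemma expand:
  "\<exists>c::nat\<Rightarrow>'a::field. c (length ws) = of_nat (fact (length ws)) \<and>
     (\<forall>t. (\<Prod>a\<leftarrow>ws. of_nat t - a) = (\<Sum>j\<le>length ws. c j * of_nat (t choose j)))"
proof (induction ws)
  case Nil
  show ?case by (rule exI[of _ "\<lambda>_. 1"]) simp
next
  case (Cons w ws)
  define d where "d = length ws"
  obtain c :: "nat \<Rightarrow> 'a" where c1: "c d = of_nat (fact d)"
    and c2: "\<And>t. (\<Prod>a\<leftarrow>ws. of_nat t - a) = (\<Sum>j\<le>d. c j * of_nat (t choose j))"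
    using Cons d_def by blast
  define c' where "c' j = (if j \<le> d then c j * (of_nat j - w) else 0)
      + (if 0 < j then c (j - 1) * of_nat j else 0)" for j
  have "c' (Suc d) = of_nat (fact (Suc d))"
    using c1 by (simp add: c'_def algebra_simps)
  moreover have "(\<Prod>a\<leftarrow>w # ws. of_nat t - a) = (\<Sum>j\<le>Suc d. c' j * of_nat (t choose j))" for t
  proof -
    have bt: "(of_nat t :: 'a) * of_nat (t choose j) = of_nat (Suc j) * of_nat (t choose Suc j) + of_nat j * of_nat (t choose j)" for j
      using arg_cong[OF binom_t[of t j], of "of_nat :: nat \<Rightarrow> 'a"] by (simp add: algebra_simps)
    have bt2: "(of_nat t - w) * (cc * of_nat (t choose j)) = cc * (of_nat j - w) * of_nat (t choose j) + cc * of_nat (Suc j) * of_nat (t choose Suc j)" for cc j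
    proof -
      have "(of_nat t - w) * (cc * of_nat (t choose j)) = cc * ((of_nat t :: 'a) * of_nat (t choose j)) - cc * w * of_nat (t choose j)"
        by (simp add: algebra_simps)
      also have "\<dots> = cc * (of_nat (Suc j) * of_nat (t choose Suc j) + of_nat j * of_nat (t choose j)) - cc * w * of_nat (t choose j)"
        by (simp only: bt)
      finally show ?thesis by (simp add: algebra_simps)
    qed
    have "(\<Prod>a\<leftarrow>w # ws. of_nat t - a) = (of_nat t - w) * (\<Sum>j\<le>d. c j * of_nat (t choose j))"
      using c2 by simp
    also have "\<dots> = (\<Sum>j\<le>d. c j * (of_nat j - w) * of_nat (t choose j))
        + (\<Sum>j\<le>d. c j * of_nat (Suc j) * of_nat (t choose Suc j))"
      unfolding sum_distrib_left sum.distrib[symmetric]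
      by (rule sum.cong) (simp_all only: bt2)
    also have "(\<Sum>j\<le>d. c j * (of_nat j - w) * of_nat (t choose j))
        = (\<Sum>j\<le>Suc d. (if j \<le> d then c j * (of_nat j - w) else 0) * of_nat (t choose j))"
      by simp
    also have "(\<Sum>j\<le>d. c j * of_nat (Suc j) * of_nat (t choose Suc j))
        = (\<Sum>j\<le>Suc d. (if 0 < j then c (j - 1) * of_nat j else 0) * of_nat (t choose j))"
      by (subst sum.atMost_Suc_shift) simp
    finally show ?thesis
      by (simp add: c'_def sum.distrib[symmetric] algebra_simps)
  qed
  ultimately show ?case by (intro exI[of _ c']) (simp add: d_def)
qed


lemma sum_ind: "finite S \<Longrightarrow> (\<Sum>x\<in>S. if P x then (1::'a::semiring_1) else 0) = of_nat (card {x\<in>S. P x})"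
  by (simp add: sum.inter_filter[symmetric])

lemma count_sup:
  assumes "finite B" "I \<subseteq> B"
  shows "card {H. H \<subseteq> B \<and> card H = card I + j \<and> I \<subseteq> H} = (card B - card I) choose j"
proof -
  have fI: "finite I" using assms finite_subset by blast
  have "bij_betw (\<lambda>H. H - I) {H. H \<subseteq> B \<and> card H = card I + j \<and> I \<subseteq> H} {D. D \<subseteq> B - I \<and> card D = j}"
  proof (rule bij_betwI[where g="\<lambda>D. D \<union> I"])
    show "(\<lambda>H. H - I) \<in> {H. H \<subseteq> B \<and> card H = card I + j \<and> I \<subseteq> H} \<rightarrow> {D. D \<subseteq> B - I \<and> card D = j}"
      using fI by (auto simp: card_Diff_subset)
    show "(\<lambda>D. D \<union> I) \<in> {D. D \<subseteq> B - I \<and> card D = j} \<rightarrow> {H. H \<subseteq> B \<and> card H = card I + j \<and> I \<subseteq> H}"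
    proof
      fix D assume "D \<in> {D. D \<subseteq> B - I \<and> card D = j}"
      then have D: "D \<subseteq> B - I" "card D = j" by auto
      have "finite D" using D(1) assms(1) finite_subset by blast
      moreover have "D \<inter> I = {}" using D by blast
      ultimately have "card (D \<union> I) = card I + j" using D fI by (simp add: card_Un_disjoint)
      then show "D \<union> I \<in> {H. H \<subseteq> B \<and> card H = card I + j \<and> I \<subseteq> H}" using D assms by auto
    qed
  qed auto
  then have "card {H. H \<subseteq> B \<and> card H = card I + j \<and> I \<subseteq> H} = card {D. D \<subseteq> B - I \<and> card D = j}"
    by (rule bij_betw_same_card)
  also have "\<dots> = card (B - I) choose j" using assms by (simp add: n_subsets)
  finally show ?thesis using assms fI by (simp add: card_Diff_subset)
qed

lemma finite_Pj: "finite X \<Longrightarrow> finite (Pj j X)"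
  unfolding Pj_def by (rule finite_subset[of _ "Pow X"]) auto

lemma W_eval:
  assumes "finite X" "I \<in> Pj i X"
  shows "(\<Sum>H\<in>{H \<in> Pj (i + j) X. I \<subseteq> H}. (LI A m H :: nat \<Rightarrow> 'a::field) k)
     = (if k < m \<and> I \<subseteq> A k then of_nat ((card (A k \<inter> X) - i) choose j) else 0)"
proof -
  have fin: "finite {H \<in> Pj (i + j) X. I \<subseteq> H}" using finite_Pj[OF assms(1)] by simp
  have "(\<Sum>H\<in>{H \<in> Pj (i + j) X. I \<subseteq> H}. (LI A m H :: nat \<Rightarrow> 'a) k)
      = of_nat (card {H \<in> {H \<in> Pj (i + j) X. I \<subseteq> H}. k < m \<and> H \<subseteq> A k})"
    unfolding LI_def by (rule sum_ind[OF fin])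
  also have "\<dots> = (if k < m \<and> I \<subseteq> A k then of_nat ((card (A k \<inter> X) - i) choose j) else 0)"
  proof (cases "k < m \<and> I \<subseteq> A k")
    case True
    have cI: "card I = i" "I \<subseteq> X" using assms(2) by (auto simp: Pj_def)
    have "{H \<in> {H \<in> Pj (i + j) X. I \<subseteq> H}. k < m \<and> H \<subseteq> A k}
        = {H. H \<subseteq> A k \<inter> X \<and> card H = card I + j \<and> I \<subseteq> H}"
      using True cI by (auto simp: Pj_def)
    then show ?thesis using True cI count_sup[of "A k \<inter> X" I j] assms(1) by simp
  next
    case False
    then have e: "{H \<in> {H \<in> Pj (i + j) X. I \<subseteq> H}. k < m \<and> H \<subseteq> A k} = {}" by auto
    show ?thesis by (simp only: e card.empty of_nat_0 if_not_P[OF False])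
  qed
  finally show ?thesis .
qed

lemma key_general:
  fixes A :: "nat \<Rightarrow> nat set" and ws :: "'a::field list"
  assumes fX: "finite X" and I: "I \<in> Pj i X"
    and roots: "\<And>k. k < m \<Longrightarrow> I \<subseteq> A k \<Longrightarrow> \<exists>a\<in>set ws. of_nat (card (A k \<inter> X) - i) = a"
    and fnz: "(of_nat (fact (length ws)) :: 'a) \<noteq> 0"
  shows "(\<lambda>k. \<Sum>H\<in>{H \<in> Pj (i + length ws) X. I \<subseteq> H}. (LI A m H :: nat \<Rightarrow> 'a) k)
     \<in> fspan (LI A m ` (\<Union>j\<in>{i..<i + length ws}. Pj j X))"
proof -
  define d where "d = length ws"
  define G where "G = (LI A m ` (\<Union>j\<in>{i..<i + d}. Pj j X) :: (nat \<Rightarrow> 'a) set)"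
  define W where "W j = (\<lambda>k. \<Sum>H\<in>{H \<in> Pj (i + j) X. I \<subseteq> H}. (LI A m H :: nat \<Rightarrow> 'a) k)" for j
  have Wspan: "W j \<in> fspan G" if "j < d" for j
  proof -
    have "W j = sum (LI A m) {H \<in> Pj (i + j) X. I \<subseteq> H}" unfolding W_def by (rule sum_fun)
    also have "\<dots> \<in> fspan G"
      by (rule Modules.module.span_sum[OF fmod], rule Modules.module.span_base[OF fmod])
         (use that in \<open>auto simp: G_def intro!: imageI UN_I[of "i+j"]\<close>)
    finally show ?thesis .
  qed
  obtain c :: "nat \<Rightarrow> 'a" where c1: "c d = of_nat (fact d)"
    and c2: "\<And>t. (\<Prod>a\<leftarrow>ws. of_nat t - a) = (\<Sum>j\<le>d. c j * of_nat (t choose j))"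
    using expand[of ws] d_def by blast
  have cnz: "c d \<noteq> 0" using c1 fnz d_def by simp
  have eq: "W d = sum (\<lambda>j. fscale (- c j / c d) (W j)) {..<d}"
  proof (rule ext)
    fix k
    show "W d k = sum (\<lambda>j. fscale (- c j / c d) (W j)) {..<d} k"
    proof (cases "k < m \<and> I \<subseteq> A k")
      case True
      define t where "t = card (A k \<inter> X) - i"
      have Wk: "W j k = of_nat (t choose j)" for j
        unfolding W_def t_def using W_eval[OF fX I, where j=j and m=m and A=A and k=k and 'a='a] True by simp
      obtain a where a: "a \<in> set ws" "of_nat t = a" using roots True t_def by blast
      have "(\<Prod>a\<leftarrow>ws. of_nat t - a) = 0"
        using a by (auto simp: prod_list_zero_iff)
      then have "0 = (\<Sum>j<d. c j * of_nat (t choose j)) + c d * of_nat (t choose d)"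
        using c2[of t] by (simp add: lessThan_Suc_atMost[symmetric])
      then have "of_nat (t choose d) = - (\<Sum>j<d. c j * of_nat (t choose j)) / c d"
        using cnz by (simp add: field_simps add_eq_0_iff)
      also have "\<dots> = (\<Sum>j<d. - c j / c d * of_nat (t choose j))"
        by (simp add: sum_divide_distrib sum_negf[symmetric])
      finally show ?thesis
        by (simp add: sum_fun_apply fscale_def Wk)
    next
      case False
      have "W j k = 0" for j unfolding W_def using W_eval[OF fX I, where j=j and m=m and A=A and k=k and 'a='a] False by simp
      then show ?thesis by (simp add: sum_fun_apply fscale_def)
    qed
  qed
  have "W d \<in> fspan G"
    unfolding eq
    by (rule Modules.module.span_sum[OF fmod], rule Modules.module.span_scale[OF fmod])
       (simp add: Wspan)
  then show ?thesis unfolding W_def G_def d_def .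
qed


lemma key_p2:
  fixes A :: "nat \<Rightarrow> nat set" and g :: "nat \<Rightarrow> 'a::field"
  assumes ch: "(2::'a) = 0"
    and fX: "finite X" and nX: "n \<notin> X"
    and Ak: "\<And>k. k < m \<Longrightarrow> A k \<subseteq> insert n X"
    and kap: "\<And>k. k < m \<Longrightarrow> (of_nat (card (A k)) :: 'a) = of_nat \<kappa>"
    and hlam: "\<And>k l. k < m \<Longrightarrow> l < m \<Longrightarrow> k \<noteq> l \<Longrightarrow> (of_nat (card (A k \<inter> A l)) :: 'a) = of_nat lam"
    and kl: "\<kappa> + lam = 1"
    and S0: "{} \<in> S" and S1: "\<And>j. j \<in> X \<Longrightarrow> {j} \<in> S"
    and gz: "\<And>k. m \<le> k \<Longrightarrow> g k = 0"
  shows "g \<in> fspan (LI A m ` S)"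
proof -
  have xx: "x + x = 0" for x :: 'a
  proof -
    have "x + x = 2 * x" by simp
    then show ?thesis using ch by simp
  qed
  have nx: "- x = x" for x :: 'a using xx[of x] by (simp add: add_eq_0_iff)
  define G where "G = (LI A m ` S :: (nat \<Rightarrow> 'a) set)"
  define nn where "nn (k::nat) = (if n \<in> A k then 1 else 0 :: 'a)" for k
  define E where "E (l::nat) = (\<lambda>k. if k = l then 1 else 0 :: 'a)" for l
  have sp: "x \<in> fspan G" if "H \<in> S" "x = LI A m H" for x H
    using Modules.module.span_base[OF fmod] that G_def by blast
  have fA: "finite (A k)" if "k < m" for k using Ak[OF that] fX finite_subset by blast
  have LIs: "LI A m {j} k = (if k < m \<and> j \<in> A k then 1 else 0)" for j k
    by (simp add: LI_def)
  have Espan: "E l \<in> fspan G" if l: "l < m" for l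
  proof -
    define R where "R = sum (\<lambda>j. LI A m {j}) (A l \<inter> X)
       + fscale (nn l) (fscale (of_nat \<kappa>) (LI A m {}) + sum (\<lambda>j. LI A m {j}) X)
       + fscale (of_nat lam) (LI A m {})"
    have "R \<in> fspan G"
      unfolding R_def
      by (intro Modules.module.span_add[OF fmod] Modules.module.span_scale[OF fmod]
          Modules.module.span_sum[OF fmod] sp[OF S0 refl] sp[OF S1 refl]) auto
    moreover have "E l = R"
    proof (rule ext)
      fix k
      show "E l k = R k"
      proof (cases "k < m")
        case False
        then have "k \<noteq> l" using l by auto
        then show ?thesis using False
          by (simp add: E_def R_def sum_fun_apply fscale_def LI_def)
      next
        case True
        have a: "(\<Sum>x\<in>A l \<inter> X. if x \<in> A k then 1 else 0) = (of_nat (card (A l \<inter> X \<inter> A k)) :: 'a)"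
        proof -
          have "{x \<in> A l \<inter> X. x \<in> A k} = A l \<inter> X \<inter> A k" by blast
          then show ?thesis using fX sum_ind[of "A l \<inter> X" "\<lambda>j. j \<in> A k", where 'a='a] by simp
        qed
        have b: "(\<Sum>x\<in>X. if x \<in> A k then 1 else 0) = (of_nat (card (X \<inter> A k)) :: 'a)"
        proof -
          have "{x \<in> X. x \<in> A k} = X \<inter> A k" by blast
          then show ?thesis using fX sum_ind[of X "\<lambda>j. j \<in> A k", where 'a='a] by simp
        qed
        have c: "card (A l \<inter> A k) = card (A l \<inter> X \<inter> A k) + (if n \<in> A l \<and> n \<in> A k then 1 else 0)"
        proof -
          have "A l \<inter> A k = (A l \<inter> X \<inter> A k) \<union> ({n} \<inter> A l \<inter> A k)" using Ak[OF l] by blast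
          moreover have "card ((A l \<inter> X \<inter> A k) \<union> ({n} \<inter> A l \<inter> A k)) = card (A l \<inter> X \<inter> A k) + card ({n} \<inter> A l \<inter> A k)"
            by (rule card_Un_disjoint) (use fX nX in auto)
          ultimately show ?thesis by auto
        qed
        have d: "card (A k) = card (X \<inter> A k) + (if n \<in> A k then 1 else 0)"
        proof -
          have "A k = (X \<inter> A k) \<union> ({n} \<inter> A k)" using Ak[OF True] by blast
          moreover have "card ((X \<inter> A k) \<union> ({n} \<inter> A k)) = card (X \<inter> A k) + card ({n} \<inter> A k)"
            by (rule card_Un_disjoint) (use fX nX in auto)
          ultimately show ?thesis by auto
        qed
        have nnk: "nn k = of_nat \<kappa> + of_nat (card (X \<inter> A k))"
        proof -
          have "(of_nat \<kappa> :: 'a) = of_nat (card (X \<inter> A k)) + nn k"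
            using arg_cong[OF d, of "of_nat :: nat \<Rightarrow> 'a"] kap[OF True] by (simp add: nn_def)
          then have "nn k = of_nat \<kappa> - of_nat (card (X \<inter> A k))" by (simp add: algebra_simps)
          then show ?thesis using nx by (simp add: diff_conv_add_uminus)
        qed
        have e: "E l k = of_nat (card (A l \<inter> A k)) + of_nat lam"
        proof (cases "k = l")
          case True2: True
          have "(of_nat (card (A l \<inter> A k)) :: 'a) + of_nat lam = of_nat (\<kappa> + lam)"
            using kap[OF l] True2 by simp
          then show ?thesis using kl True2 by (simp add: E_def)
        next
          case False
          then show ?thesis using hlam[OF l True] xx by (simp add: E_def)
        qed
        have "R k = of_nat (card (A l \<inter> X \<inter> A k)) + nn l * nn k + of_nat lam"
          using True by (simp add: R_def sum_fun_apply fscale_def a b nnk LI_def)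
        also have "\<dots> = E l k"
          unfolding e c by (simp add: nn_def)
        finally show ?thesis ..
      qed
    qed
    ultimately show ?thesis by simp
  qed
  have "g = sum (\<lambda>l. fscale (g l) (E l)) {..<m}"
  proof (rule ext)
    fix k
    show "g k = sum (\<lambda>l. fscale (g l) (E l)) {..<m} k"
    proof (cases "k < m")
      case True
      have "(\<Sum>x<m. g x * (if x = k then 1 else 0)) = (\<Sum>x<m. if x = k then g x else 0)"
        by (rule sum.cong) auto
      then show ?thesis using True by (simp add: sum_fun_apply fscale_def E_def eq_commute[of k])
    qed (use gz[of k] in \<open>auto simp: sum_fun_apply fscale_def E_def\<close>)
  qed
  also have "\<dots> \<in> fspan G"
    by (intro Modules.module.span_sum[OF fmod] Modules.module.span_scale[OF fmod] Espan) auto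
  finally show ?thesis unfolding G_def .
qed


theorem mainTheorem5:
  fixes p n m i :: nat and K L :: "nat set" and A :: "nat \<Rightarrow> nat set"
  assumes "prime p" and "card (UNIV :: 'a::{field,finite} set) = p"
    and "K \<subseteq> {0..<p}" and "L \<subseteq> {0..<p}" and "K \<inter> L = {}"
    and "inj_on A {..<m}"
    and "\<And>k. k < m \<Longrightarrow> A k \<subseteq> {1..n}"
    and "\<And>k. k < m \<Longrightarrow> card (A k) mod p \<in> K"
    and "\<And>k l. k < m \<Longrightarrow> l < m \<Longrightarrow> k \<noteq> l \<Longrightarrow> card (A k \<inter> A l) mod p \<in> L"
    and "int i \<le> int (card L) - 2 * int (card K) + 1"
  shows "(fspan ((LI A m :: nat set \<Rightarrow> nat \<Rightarrow> 'a::{field,finite}) `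
             (\<Union>j\<in>{i..<i + 2 * card K}. Pj j {1..n-1})))
       = {(\<lambda>k. u k + v k) | u v.
            u \<in> fspan ((LI A m :: nat set \<Rightarrow> nat \<Rightarrow> 'a::{field,finite}) `
                    (\<Union>j\<in>{i..<i + 2 * card K}. Pj j {1..n-1}))
          \<and> v \<in> fspan ((\<lambda>I. (\<lambda>k. \<Sum>H\<in>{H \<in> Pj (i + 2 * card K) {1..n-1}. I \<subseteq> H}.
                                   (LI A m H :: nat \<Rightarrow> 'a) k))
                         ` Pj i {1..n-1})}"
proof -
  note prp = assms(1) and cardF = assms(2) and KL = assms(3,4,5) and Asub = assms(7)
    and Kk = assms(8) and Ll = assms(9) and ib = assms(10)
  define X where "X = {1..n-1}"
  define S1 where "S1 = fspan ((LI A m :: nat set \<Rightarrow> nat \<Rightarrow> 'a) ` (\<Union>j\<in>{i..<i + 2 * card K}. Pj j X))"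
  define gen where "gen I = (\<lambda>k. \<Sum>H\<in>{H \<in> Pj (i + 2 * card K) X. I \<subseteq> H}. (LI A m H :: nat \<Rightarrow> 'a) k)" for I
  have fX: "finite X" by (simp add: X_def)
  have fK: "finite K" using KL(1) finite_subset by blast
  have fL: "finite L" using KL(2) finite_subset by blast
  have CH: "CHAR('a) = p" by (rule charp[OF prp cardF])
  have AkX: "A k \<inter> X = A k - {n}" if "k < m" for k using Asub[OF that] by (auto simp: X_def subset_iff)
  have fA: "finite (A k)" if "k < m" for k using Asub[OF that] finite_subset by blast
  have gen_sub: "gen I \<in> S1" if I: "I \<in> Pj i X" for I
  proof (cases "2 * card K < p")
    case True
    define xs where "xs = sorted_list_of_set K"
    define ws where "ws = map (\<lambda>\<kappa>. (of_nat \<kappa> :: 'a) - of_nat i) xs @ map (\<lambda>\<kappa>. (of_nat \<kappa> :: 'a) - 1 - of_nat i) xs"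
    have len: "length ws = 2 * card K" by (simp add: ws_def xs_def)
    have roots: "\<exists>a\<in>set ws. of_nat (card (A k \<inter> X) - i) = a" if k: "k < m" and IA: "I \<subseteq> A k" for k
    proof -
      have cI: "card I = i" "I \<subseteq> X" using I by (auto simp: Pj_def)
      have "i \<le> card (A k \<inter> X)" using cI IA card_mono[of "A k \<inter> X" I] fX by auto
      then have e1: "(of_nat (card (A k \<inter> X) - i) :: 'a) = of_nat (card (A k \<inter> X)) - of_nat i"
        by (simp add: of_nat_diff)
      define \<kappa> where "\<kappa> = card (A k) mod p"
      have kxs: "\<kappa> \<in> set xs" using Kk[OF k] fK by (simp add: xs_def \<kappa>_def)
      have ek: "(of_nat (card (A k)) :: 'a) = of_nat \<kappa>"
        unfolding \<kappa>_def by (rule of_nat_mod_char[OF CH, symmetric])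
      show ?thesis
      proof (cases "n \<in> A k")
        case True
        have "card (A k \<inter> X) = card (A k) - 1" using True fA[OF k] AkX[OF k] by simp
        moreover have "card (A k) \<ge> 1" using True fA[OF k] card_0_eq[of "A k"] by fastforce
        ultimately have "(of_nat (card (A k \<inter> X)) :: 'a) = of_nat \<kappa> - 1"
          using ek by (simp add: of_nat_diff)
        then show ?thesis using e1 kxs by (auto simp: ws_def)
      next
        case False
        have "card (A k \<inter> X) = card (A k)" using False AkX[OF k] by simp
        then show ?thesis using e1 kxs ek by (auto simp: ws_def)
      qed
    qed
    have fnz: "(of_nat (fact (length ws)) :: 'a) \<noteq> 0"
      using not_dvd_fact[OF prp True] by (simp add: len of_nat_eq_0_iff_char_dvd CH)
    have "(\<lambda>k. \<Sum>H\<in>{H \<in> Pj (i + length ws) X. I \<subseteq> H}. (LI A m H :: nat \<Rightarrow> 'a) k)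
       \<in> fspan (LI A m ` (\<Union>j\<in>{i..<i + length ws}. Pj j X))"
      by (rule key_general[OF fX I roots fnz])
    then show ?thesis unfolding gen_def S1_def by (simp only: len)
  next
    case False
    have "card (K \<union> L) = card K + card L" using fK fL KL(3) by (simp add: card_Un_disjoint)
    moreover have "card (K \<union> L) \<le> p" using card_mono[of "{0..<p}" "K \<union> L"] KL by auto
    moreover have "p \<ge> 2" using prp prime_ge_2_nat by blast
    ultimately have ar: "p = 2" "card K = 1" "card L = 1" "i = 0" using False ib by linarith+
    obtain \<kappa> where Kk1: "K = {\<kappa>}" using ar(2) card_1_singletonE by blast
    obtain lam where Ll1: "L = {lam}" using ar(3) card_1_singletonE by blast
    have kl: "\<kappa> + lam = 1" using KL Kk1 Ll1 ar(1) by auto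
    have ch: "(2::'a) = 0"
    proof -
      have "(of_nat 2 :: 'a) = 0" using of_nat_CHAR[where 'a='a] CH ar(1) by simp
      then show ?thesis by simp
    qed
    have "gen I \<in> fspan (LI A m ` (\<Union>j\<in>{i..<i + 2 * card K}. Pj j X))"
    proof (rule key_p2[OF ch fX _ _ _ _ kl])
      show "n \<notin> X" by (cases n) (auto simp: X_def)
      show "A k \<subseteq> insert n X" if "k < m" for k using Asub[OF that] by (auto simp: X_def subset_iff)
      show "(of_nat (card (A k)) :: 'a) = of_nat \<kappa>" if "k < m" for k
        using Kk[OF that] Kk1 of_nat_mod_char[OF CH, of "card (A k)"] by simp
      show "(of_nat (card (A k \<inter> A l)) :: 'a) = of_nat lam" if "k < m" "l < m" "k \<noteq> l" for k l
        using Ll[OF that] Ll1 of_nat_mod_char[OF CH, of "card (A k \<inter> A l)"] by simp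
      show "{} \<in> (\<Union>j\<in>{i..<i + 2 * card K}. Pj j X)" using ar by (auto simp: Pj_def)
      show "{j} \<in> (\<Union>j\<in>{i..<i + 2 * card K}. Pj j X)" if "j \<in> X" for j
        using ar that by (auto simp: Pj_def intro!: UN_I[of 1])
      show "gen I k = 0" if "m \<le> k" for k using that by (simp add: gen_def LI_def)
    qed
    then show ?thesis unfolding S1_def .
  qed
  have sub: "fspan (gen ` Pj i X) \<subseteq> S1"
    by (rule Modules.module.span_minimal[OF fmod]) (auto simp: S1_def gen_sub[unfolded S1_def] Modules.module.subspace_span[OF fmod])
  have "S1 = {(\<lambda>k. u k + v k) | u v. u \<in> S1 \<and> v \<in> fspan (gen ` Pj i X)}"
  proof (rule equalityI)
    show "S1 \<subseteq> {(\<lambda>k. u k + v k) | u v. u \<in> S1 \<and> v \<in> fspan (gen ` Pj i X)}"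
    proof
      fix x assume x: "x \<in> S1"
      have "x = (\<lambda>k. x k + (0 :: nat \<Rightarrow> 'a) k)" by simp
      then show "x \<in> {(\<lambda>k. u k + v k) | u v. u \<in> S1 \<and> v \<in> fspan (gen ` Pj i X)}"
        using x Modules.module.span_zero[OF fmod] by blast
    qed
    show "{(\<lambda>k. u k + v k) | u v. u \<in> S1 \<and> v \<in> fspan (gen ` Pj i X)} \<subseteq> S1"
    proof clarify
      fix u v assume u: "u \<in> S1" and v: "v \<in> fspan (gen ` Pj i X)"
      have "(\<lambda>k. u k + v k) = u + v" by (simp add: fun_eq_iff)
      moreover have "u + v \<in> S1"
        using u v sub unfolding S1_def by (blast intro: Modules.module.span_add[OF fmod])
      ultimately show "(\<lambda>k. u k + v k) \<in> S1" by simp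
    qed
  qed
  then show ?thesis unfolding S1_def gen_def X_def .
qed

end
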